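(* Let $\Lambda_i\in\mathcal H_I$, $i\in[n]$, $\mathbb P$ atomless, $Y\ge0$ with $1<\mathbb E^{\mathbb P}(Y)<\infty$. Suppose $\overline\Lambda^*$ is attainable and at least one $\Lambda_i$ is constant. Then for all $X\in\mathcal X$ $$\mathop{\square}_{i=1}^n\sup_{\mathbb Q\in\mathcal P(\mathbb P,0,Y)}\Lambda_i\mathrm{VaR}^{\mathbb Q}(X)=\inf\Big\{x\in\mathbb R:\mathbb E^{\mathbb P}(Y\mathds 1_{\{X>x\}})\le\sum_{i=1}^n\lambda_i^+\Big\}.$$
   Context: $\Lambda\mathrm{VaR}^{\mathbb Q}(X)=\inf\{x\in\mathbb R:\mathbb Q(X>x)\le\Lambda(x)\}$; $\mathcal H_I$: increasing functions $\mathbb R\to(0,1)$; $\lambda_i^+=\sup_x\Lambda_i(x)$. $\mathcal P(\mathbb P,0,Y)=\{\mathbb Q\ll\mathbb P:0\le\mathrm d\mathbb Q/\mathrm d\mathbb P\le Y\}$. $\overline\Lambda^*(x)=\sup_{y_1+\dots+y_n=x}\sum_i\Lambda_i(y_i)$, attainable if the supremum is attained for every $x$. Inf-convolution $\mathop{\square}_i\rho_i(X)=\inf\{\sum_i\rho_i(X_i):X_i\in\mathcal X,\sum_iX_i=X\}$, $\mathcal X$ a set of real-valued random variables containing constants, closed under sums, differences, multiplication by indicators. *)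

theory Defs
  imports "HOL-Probability.Probability"
begin

definition atomless :: "'a measure \<Rightarrow> bool" where
  "atomless M \<longleftrightarrow> (\<forall>A\<in>sets M. measure M A > 0 \<longrightarrow>
      (\<exists>B\<in>sets M. B \<subseteq> A \<and> 0 < measure M B \<and> measure M B < measure M A))"

definition H_I :: "(real \<Rightarrow> real) set" where
  "H_I = {L. mono L \<and> (\<forall>x. 0 < L x \<and> L x < 1)}"

definition LVaR :: "(real \<Rightarrow> real) \<Rightarrow> 'a measure \<Rightarrow> ('a \<Rightarrow> real) \<Rightarrow> ereal" where
  "LVaR L Q X = Inf {ereal x | x. measure Q {\<omega> \<in> space Q. X \<omega> > x} \<le> L x}"

definition PQ :: "'a measure \<Rightarrow> ('a \<Rightarrow> real) \<Rightarrow> 'a measure set" where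
  "PQ M Y = {density M (\<lambda>\<omega>. ennreal (D \<omega>)) | D.
      D \<in> borel_measurable M \<and> (\<forall>\<omega>\<in>space M. 0 \<le> D \<omega> \<and> D \<omega> \<le> Y \<omega>)
      \<and> integral\<^sup>L M D = 1}"

definition inf_conv :: "'a measure \<Rightarrow> ('a \<Rightarrow> real) set \<Rightarrow> nat \<Rightarrow> (nat \<Rightarrow> ('a \<Rightarrow> real) \<Rightarrow> ereal)
    \<Rightarrow> ('a \<Rightarrow> real) \<Rightarrow> ereal" where
  "inf_conv M Xs n \<rho> X = Inf {(\<Sum>i<n. \<rho> i (Z i)) | Z.
      (\<forall>i<n. Z i \<in> Xs) \<and> (\<forall>\<omega>\<in>space M. (\<Sum>i<n. Z i \<omega>) = X \<omega>)}"

definition Lambda_bar_star :: "nat \<Rightarrow> (nat \<Rightarrow> real \<Rightarrow> real) \<Rightarrow> real \<Rightarrow> real" where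
  "Lambda_bar_star n L x = Sup {(\<Sum>i<n. L i (y i)) | y. (\<Sum>i<n. y i) = x}"

definition attainable :: "nat \<Rightarrow> (nat \<Rightarrow> real \<Rightarrow> real) \<Rightarrow> bool" where
  "attainable n L \<longleftrightarrow> (\<forall>x. \<exists>y. (\<Sum>i<n. y i) = x \<and>
      (\<Sum>i<n. L i (y i)) = Lambda_bar_star n L x)"

definition admissible_rv_set :: "'a measure \<Rightarrow> ('a \<Rightarrow> real) set \<Rightarrow> bool" where
  "admissible_rv_set M Xs \<longleftrightarrow>
     (\<forall>X\<in>Xs. X \<in> borel_measurable M) \<and>
     (\<forall>c. (\<lambda>_. c) \<in> Xs) \<and>
     (\<forall>X\<in>Xs. \<forall>Z\<in>Xs. (\<lambda>\<omega>. X \<omega> + Z \<omega>) \<in> Xs \<and> (\<lambda>\<omega>. X \<omega> - Z \<omega>) \<in> Xs) \<and>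
     (\<forall>X\<in>Xs. \<forall>A\<in>sets M. (\<lambda>\<omega>. indicator A \<omega> * X \<omega>) \<in> Xs)"

end

theory Submission
  imports Defs
begin


lemma atomless_halving:
  assumes fm: "finite_measure N" and at: "atomless N" and A: "A \<in> sets N" "measure N A > 0"
  shows "\<exists>B\<in>sets N. B \<subseteq> A \<and> 0 < measure N B \<and> measure N B \<le> measure N A / 2 ^ k"
proof (induction k)
  case 0
  then show ?case using A by auto
next
  case (Suc k)
  then obtain B where B: "B \<in> sets N" "B \<subseteq> A" "0 < measure N B" "measure N B \<le> measure N A / 2 ^ k"
    by blast
  then obtain E where E: "E \<in> sets N" "E \<subseteq> B" "0 < measure N E" "measure N E < measure N B"
    using at unfolding atomless_def by blast
  show ?case
  proof (cases "measure N E \<le> measure N B / 2")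
    case True
    have "measure N E \<le> measure N A / 2 ^ Suc k" using True B(4) by simp
    then show ?thesis using E B by blast
  next
    case False
    have d: "measure N (B - E) = measure N B - measure N E"
      using finite_measure.finite_measure_Diff[OF fm B(1) E(1)] E(2) by simp
    have "B - E \<in> sets N" using B E by auto
    moreover have "B - E \<subseteq> A" using B by auto
    moreover have "0 < measure N (B - E)" using d E by simp
    moreover have "measure N (B - E) \<le> measure N A / 2 ^ Suc k" using d False B(4) by simp
    ultimately show ?thesis by blast
  qed
qed

lemma atomless_small:
  assumes fm: "finite_measure N" and at: "atomless N" and A: "A \<in> sets N" "measure N A > 0"
    and e: "e > 0"
  shows "\<exists>B\<in>sets N. B \<subseteq> A \<and> 0 < measure N B \<and> measure N B < e"
proof -
  have "0 < e / measure N A" using e A by simp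
  then obtain k where k: "(1/2::real) ^ k < e / measure N A"
    using real_arch_pow_inv[of "e / measure N A" "1/2"] by auto
  then have "1 / 2 ^ k < e / measure N A"
    by (simp add: power_one_over)
  then have "measure N A / 2 ^ k < e"
    using A(2) by (simp add: divide_less_eq less_divide_eq mult.commute)
  moreover obtain B where B: "B\<in>sets N" "B \<subseteq> A" "0 < measure N B" "measure N B \<le> measure N A / 2 ^ k"
    using atomless_halving[OF fm at A, of k] by blast
  ultimately have "measure N B < e" by linarith
  then show ?thesis using B by blast
qed

lemma atomless_split:
  assumes fm: "finite_measure N" and at: "atomless N" and A: "A \<in> sets N"
    and al: "0 \<le> \<alpha>" "\<alpha> \<le> measure N A"
  shows "\<exists>B\<in>sets N. B \<subseteq> A \<and> measure N B = \<alpha>"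
proof -
  interpret finite_measure N by fact
  define \<mu> where "\<mu> = measure N"
  define G where "G S = {\<mu> C | C. C \<in> sets N \<and> C \<subseteq> A - S \<and> \<mu> C \<le> \<alpha> - \<mu> S}" for S
  define g where "g S = Sup (G S)" for S
  define ok where "ok S C \<longleftrightarrow> C \<in> sets N \<and> C \<subseteq> A - S \<and> \<mu> C \<le> \<alpha> - \<mu> S \<and> g S \<le> 2 * \<mu> C" for S C
  have bdd: "bdd_above (G S)" for S
    by (rule bdd_aboveI[of _ "\<alpha> - \<mu> S"]) (auto simp: G_def)
  have ex: "\<exists>C. ok S C" if S: "S \<in> sets N" "S \<subseteq> A" "\<mu> S \<le> \<alpha>" for S
  proof -
    have "0 \<in> G S" unfolding G_def using S by (auto intro!: exI[of _ "{}"] simp: \<mu>_def)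
    then have ne: "G S \<noteq> {}" by auto
    show ?thesis
    proof (cases "g S \<le> 0")
      case True
      then have "ok S {}" using S by (simp add: ok_def \<mu>_def)
      then show ?thesis by blast
    next
      case False
      then have "g S / 2 < Sup (G S)" by (simp add: g_def)
      then obtain x where x: "x \<in> G S" "g S / 2 < x" using less_cSup_iff[OF ne bdd] by blast
      then obtain C where C: "C \<in> sets N" "C \<subseteq> A - S" "\<mu> C \<le> \<alpha> - \<mu> S" "x = \<mu> C"
        unfolding G_def by blast
      then have "ok S C" using x by (simp add: ok_def)
      then show ?thesis by blast
    qed
  qed
  define pick where "pick S = (SOME C. ok S C)" for S
  define Bs where "Bs k = ((\<lambda>S. S \<union> pick S) ^^ k) {}" for k
  have Bs0: "Bs 0 = {}" by (simp add: Bs_def)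
  have BsS: "Bs (Suc k) = Bs k \<union> pick (Bs k)" for k by (simp add: Bs_def)
  have inv: "Bs k \<in> sets N \<and> Bs k \<subseteq> A \<and> \<mu> (Bs k) \<le> \<alpha> \<and> ok (Bs k) (pick (Bs k))" for k
  proof (induction k)
    case 0
    have "\<mu> {} \<le> \<alpha>" using al by (simp add: \<mu>_def)
    then have "\<exists>C. ok {} C" using ex[of "{}"] by simp
    then have "ok {} (pick {})" unfolding pick_def by (rule someI_ex)
    then show ?case using al by (simp add: Bs0 \<mu>_def)
  next
    case (Suc k)
    let ?S = "Bs k" and ?C = "pick (Bs k)"
    have C: "?C \<in> sets N" "?C \<subseteq> A - ?S" "\<mu> ?C \<le> \<alpha> - \<mu> ?S" using Suc by (auto simp: ok_def)
    have m: "\<mu> (?S \<union> ?C) = \<mu> ?S + \<mu> ?C"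
      unfolding \<mu>_def using C Suc by (intro finite_measure_Union) auto
    have s1: "?S \<union> ?C \<in> sets N" "?S \<union> ?C \<subseteq> A" "\<mu> (?S \<union> ?C) \<le> \<alpha>" using C Suc m by auto
    then have "\<exists>C'. ok (?S \<union> ?C) C'" using ex[of "?S \<union> ?C"] by blast
    then have "ok (?S \<union> ?C) (pick (?S \<union> ?C))" unfolding pick_def by (rule someI_ex)
    then show ?case using s1 by (simp add: BsS)
  qed
  have muS: "\<mu> (Bs (Suc k)) = \<mu> (Bs k) + \<mu> (pick (Bs k))" for k
    unfolding BsS \<mu>_def using inv[of k] by (intro finite_measure_Union) (auto simp: ok_def)
  have inc: "incseq Bs" by (rule incseq_SucI) (simp add: BsS)
  define B where "B = (\<Union>k. Bs k)"
  have rng: "range Bs \<subseteq> sets N" using inv by auto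
  have lim: "(\<lambda>k. \<mu> (Bs k)) \<longlonglongrightarrow> \<mu> B"
    unfolding \<mu>_def B_def by (rule finite_Lim_measure_incseq[OF rng inc])
  have Bsets: "B \<in> sets N" unfolding B_def using rng by auto
  have BA: "B \<subseteq> A" unfolding B_def using inv by auto
  have Ble: "\<mu> B \<le> \<alpha>"
    using lim inv by (intro LIMSEQ_le_const2[OF lim]) auto
  have lim2: "(\<lambda>k. \<mu> (Bs (Suc k))) \<longlonglongrightarrow> \<mu> B"
    using lim by (rule LIMSEQ_Suc)
  have "(\<lambda>k. \<mu> (Bs (Suc k)) - \<mu> (Bs k)) \<longlonglongrightarrow> \<mu> B - \<mu> B"
    by (intro tendsto_diff lim lim2)
  then have lim0: "(\<lambda>k. 2 * \<mu> (pick (Bs k))) \<longlonglongrightarrow> 2 * 0"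
    by (intro tendsto_mult tendsto_const) (simp add: muS)
  have "\<mu> B = \<alpha>"
  proof (rule ccontr)
    assume "\<mu> B \<noteq> \<alpha>"
    then have lt: "\<mu> B < \<alpha>" using Ble by simp
    have "\<mu> (A - B) = \<mu> A - \<mu> B"
      unfolding \<mu>_def using finite_measure_Diff[OF A Bsets] BA by simp
    then have pos: "\<mu> (A - B) > 0" using lt al by (simp add: \<mu>_def)
    obtain D where D: "D \<in> sets N" "D \<subseteq> A - B" "0 < \<mu> D" "\<mu> D < \<alpha> - \<mu> B"
      using atomless_small[OF fm at _ pos[unfolded \<mu>_def], of "\<alpha> - \<mu> B"] A Bsets lt
      unfolding \<mu>_def by auto
    have "\<mu> D \<le> 2 * \<mu> (pick (Bs k))" for k
    proof -
      have sub: "Bs k \<subseteq> B" unfolding B_def by auto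
      have "\<mu> (Bs k) \<le> \<mu> B" unfolding \<mu>_def using sub Bsets by (intro finite_measure_mono) auto
      then have "\<mu> D \<le> \<alpha> - \<mu> (Bs k)" using D by linarith
      moreover have "D \<subseteq> A - Bs k" using D sub by blast
      ultimately have "\<mu> D \<in> G (Bs k)" unfolding G_def using D by blast
      then have "\<mu> D \<le> g (Bs k)" unfolding g_def by (intro cSup_upper bdd)
      also have "\<dots> \<le> 2 * \<mu> (pick (Bs k))" using inv[of k] by (simp add: ok_def)
      finally show ?thesis .
    qed
    then have "\<mu> D \<le> 2 * 0" by (intro LIMSEQ_le_const[OF lim0]) auto
    then show False using D by simp
  qed
  then show ?thesis using Bsets BA unfolding \<mu>_def by blast
qed


lemma atomless_partition:
  assumes fm: "finite_measure N" and at: "atomless N"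
  shows "A \<in> sets N \<Longrightarrow> \<forall>i<Suc m. 0 \<le> lam i \<Longrightarrow> measure N A \<le> (\<Sum>i<Suc m. lam i) \<Longrightarrow>
    \<exists>B. (\<forall>i<Suc m. B i \<in> sets N \<and> B i \<subseteq> A \<and> measure N (B i) \<le> lam i) \<and>
        (\<forall>i<Suc m. \<forall>j<Suc m. i \<noteq> j \<longrightarrow> B i \<inter> B j = {}) \<and> A \<subseteq> (\<Union>i<Suc m. B i)"
proof (induction m arbitrary: A)
  case 0
  then show ?case by (intro exI[of _ "\<lambda>_. A"]) auto
next
  case (Suc m)
  interpret finite_measure N by fact
  define a where "a = min (lam (Suc m)) (measure N A)"
  have a: "0 \<le> a" "a \<le> measure N A" using Suc.prems by (auto simp: a_def)
  obtain C where C: "C \<in> sets N" "C \<subseteq> A" "measure N C = a"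
    using atomless_split[OF fm at Suc.prems(1) a] by blast
  have mA': "measure N (A - C) = measure N A - a"
    using finite_measure_Diff[OF Suc.prems(1) C(1)] C by simp
  have "measure N A - a \<le> (\<Sum>i<Suc m. lam i)"
  proof (cases "lam (Suc m) \<le> measure N A")
    case True
    then show ?thesis using Suc.prems(3) by (simp add: a_def)
  next
    case False
    then have "a = measure N A" by (simp add: a_def)
    moreover have "0 \<le> (\<Sum>i<Suc m. lam i)" using Suc.prems(2) by (intro sum_nonneg) auto
    ultimately show ?thesis by simp
  qed
  then obtain B' where B': "\<forall>i<Suc m. B' i \<in> sets N \<and> B' i \<subseteq> A - C \<and> measure N (B' i) \<le> lam i"
     "\<forall>i<Suc m. \<forall>j<Suc m. i \<noteq> j \<longrightarrow> B' i \<inter> B' j = {}" "A - C \<subseteq> (\<Union>i<Suc m. B' i)"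
    using Suc.IH[of "A - C"] Suc.prems C mA' by auto
  define B where "B = B'(Suc m := C)"
  have "\<forall>i<Suc (Suc m). B i \<in> sets N \<and> B i \<subseteq> A \<and> measure N (B i) \<le> lam i"
  proof (intro allI impI)
    fix i assume i: "i < Suc (Suc m)"
    show "B i \<in> sets N \<and> B i \<subseteq> A \<and> measure N (B i) \<le> lam i"
    proof (cases "i = Suc m")
      case True then show ?thesis using C by (simp add: B_def a_def)
    next
      case False then have "i < Suc m" using i by simp
      then show ?thesis using B'(1) False by (auto simp: B_def)
    qed
  qed
  moreover have "\<forall>i<Suc (Suc m). \<forall>j<Suc (Suc m). i \<noteq> j \<longrightarrow> B i \<inter> B j = {}"
  proof (intro allI impI)
    fix i j assume ij: "i < Suc (Suc m)" "j < Suc (Suc m)" "i \<noteq> j"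
    show "B i \<inter> B j = {}"
    proof (cases "i = Suc m")
      case True
      then have "j < Suc m" using ij by simp
      then have "B' j \<subseteq> A - C" using B'(1) by blast
      then show ?thesis using True ij by (auto simp: B_def)
    next
      case False
      then have i: "i < Suc m" using ij by simp
      show ?thesis
      proof (cases "j = Suc m")
        case True
        have "B' i \<subseteq> A - C" using B'(1) i by blast
        then show ?thesis using True i ij by (auto simp: B_def)
      next
        case False then have "j < Suc m" using ij by simp
        then show ?thesis using B'(2) i ij \<open>i \<noteq> Suc m\<close> False by (simp add: B_def)
      qed
    qed
  qed
  moreover have "A \<subseteq> (\<Union>i<Suc (Suc m). B i)"
  proof
    fix x assume x: "x \<in> A"
    show "x \<in> (\<Union>i<Suc (Suc m). B i)"
    proof (cases "x \<in> C")
      case True then show ?thesis by (auto simp: B_def intro!: bexI[of _ "Suc m"])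
    next
      case False
      then obtain i where "i < Suc m" "x \<in> B' i" using B'(3) x by blast
      then show ?thesis by (auto simp: B_def intro!: bexI[of _ i])
    qed
  qed
  ultimately show ?case by blast
qed

lemma measure_density_int:
  fixes f :: "'a \<Rightarrow> real"
  assumes f: "f \<in> borel_measurable M" "\<forall>\<omega>\<in>space M. 0 \<le> f \<omega>" "integrable M f"
    and A: "A \<in> sets M"
  shows "measure (density M (\<lambda>\<omega>. ennreal (f \<omega>))) A = integral\<^sup>L M (\<lambda>\<omega>. f \<omega> * indicator A \<omega>)"
proof -
  have i: "integrable M (\<lambda>\<omega>. f \<omega> * indicator A \<omega>)"
    using f A by (intro integrable_real_mult_indicator) auto
  have "emeasure (density M (\<lambda>\<omega>. ennreal (f \<omega>))) A = (\<integral>\<^sup>+ x. ennreal (f x) * indicator A x \<partial>M)"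
    using f A by (simp add: emeasure_density)
  also have "\<dots> = (\<integral>\<^sup>+ x. ennreal (f x * indicator A x) \<partial>M)"
    by (intro nn_integral_cong) (auto simp: indicator_def)
  also have "\<dots> = ennreal (integral\<^sup>L M (\<lambda>\<omega>. f \<omega> * indicator A \<omega>))"
    using f i by (intro nn_integral_eq_integral) (auto simp: indicator_def)
  finally show ?thesis
    unfolding measure_def using f A
    by (simp add: integral_nonneg_AE indicator_def)
qed


lemma finite_density:
  fixes Y :: "'a \<Rightarrow> real"
  assumes Y: "Y \<in> borel_measurable M" "\<forall>\<omega>\<in>space M. 0 \<le> Y \<omega>" "integrable M Y"
  shows "finite_measure (density M (\<lambda>\<omega>. ennreal (Y \<omega>)))"
proof (rule finite_measureI)
  have "emeasure (density M (\<lambda>\<omega>. ennreal (Y \<omega>))) (space M) = (\<integral>\<^sup>+ x. ennreal (Y x) * indicator (space M) x \<partial>M)"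
    using Y by (simp add: emeasure_density)
  also have "\<dots> = (\<integral>\<^sup>+ x. ennreal (Y x) \<partial>M)"
    by (intro nn_integral_cong) (auto simp: indicator_def)
  also have "\<dots> = ennreal (integral\<^sup>L M Y)"
    using Y by (intro nn_integral_eq_integral) auto
  finally show "emeasure (density M (\<lambda>\<omega>. ennreal (Y \<omega>))) (space (density M (\<lambda>\<omega>. ennreal (Y \<omega>)))) \<noteq> \<infinity>"
    by simp
qed

lemma density_pos:
  fixes Y :: "'a \<Rightarrow> real"
  assumes Y: "Y \<in> borel_measurable M" "\<forall>\<omega>\<in>space M. 0 \<le> Y \<omega>" "integrable M Y"
    and C: "C \<in> sets M" "measure M C > 0" "\<forall>\<omega>\<in>C. 0 < Y \<omega>" and fin: "finite_measure M"
  shows "measure (density M (\<lambda>\<omega>. ennreal (Y \<omega>))) C > 0"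
proof (rule ccontr)
  let ?N = "density M (\<lambda>\<omega>. ennreal (Y \<omega>))"
  interpret N: finite_measure ?N using finite_density[OF Y] .
  assume "\<not> ?thesis"
  then have "measure ?N C = 0" using measure_nonneg[of ?N C] by linarith
  then have "emeasure ?N C = 0" using C by (simp add: N.emeasure_eq_measure)
  then have "C \<in> null_sets ?N" using C by (auto intro: null_setsI)
  then have "AE x in M. x \<in> C \<longrightarrow> ennreal (Y x) = 0"
    using null_sets_density_iff[of "\<lambda>\<omega>. ennreal (Y \<omega>)" M C] Y by auto
  then have "AE x in M. x \<notin> C"
    by eventually_elim (use C in auto)
  then have "emeasure M C = 0"
    using AE_iff_measurable[of C M "\<lambda>x. x \<notin> C"] C sets.sets_into_space by auto
  then have "measure M C = 0" by (simp add: measure_def)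
  then show False using C by simp
qed

lemma atomless_density:
  fixes Y :: "'a \<Rightarrow> real"
  assumes P: "prob_space M" "atomless M"
    and Y: "Y \<in> borel_measurable M" "\<forall>\<omega>\<in>space M. 0 \<le> Y \<omega>" "integrable M Y"
  shows "atomless (density M (\<lambda>\<omega>. ennreal (Y \<omega>)))"
  unfolding atomless_def
proof (intro ballI impI)
  let ?N = "density M (\<lambda>\<omega>. ennreal (Y \<omega>))"
  interpret N: finite_measure ?N using finite_density[OF Y] .
  interpret prob_space M by fact
  fix A assume A: "A \<in> sets ?N" "measure ?N A > 0"
  then have AM: "A \<in> sets M" by simp
  define A' where "A' = A \<inter> {\<omega>\<in>space M. 0 < Y \<omega>}"
  have A'M: "A' \<in> sets M" unfolding A'_def using AM Y by measurable
  have eq: "measure ?N A = measure ?N A'"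
  proof -
    have "measure ?N A = integral\<^sup>L M (\<lambda>\<omega>. Y \<omega> * indicator A \<omega>)"
      using Y AM by (rule measure_density_int)
    also have "\<dots> = integral\<^sup>L M (\<lambda>\<omega>. Y \<omega> * indicator A' \<omega>)"
    proof (rule Bochner_Integration.integral_cong[OF refl])
      fix x assume "x \<in> space M"
      then show "Y x * indicator A x = Y x * indicator A' x"
        using Y by (cases "0 < Y x") (auto simp: A'_def indicator_def)
    qed
    also have "\<dots> = measure ?N A'"
      using Y A'M by (rule measure_density_int[symmetric])
    finally show ?thesis .
  qed
  have PA': "measure M A' > 0"
  proof (rule ccontr)
    assume "\<not> ?thesis"
    then have "measure M A' = 0" using measure_nonneg[of M A'] by linarith
    then have "A' \<in> null_sets M" using A'M by (simp add: emeasure_eq_measure null_sets_def)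
    then have "AE x in M. x \<notin> A'" by (rule AE_not_in)
    then have "AE x in M. x \<in> A' \<longrightarrow> ennreal (Y x) = 0" by eventually_elim auto
    then have "A' \<in> null_sets ?N" using null_sets_density_iff[of "\<lambda>\<omega>. ennreal (Y \<omega>)" M A'] Y A'M by auto
    then have "measure ?N A' = 0" by (simp add: measure_def null_sets_def)
    then show False using A eq by simp
  qed
  obtain B where B: "B \<in> sets M" "B \<subseteq> A'" "0 < measure M B" "measure M B < measure M A'"
    using P(2) A'M PA' unfolding atomless_def by blast
  have pos: "measure ?N C > 0" if "C \<in> sets M" "C \<subseteq> A'" "measure M C > 0" for C
    using density_pos[OF Y that(1) that(3)] that(2) finite_measure_axioms by (auto simp: A'_def)
  have "measure M (A' - B) = measure M A' - measure M B"
    using finite_measure_Diff[OF A'M B(1)] B(2) by simp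
  then have "measure ?N (A' - B) > 0" using B A'M by (intro pos) auto
  moreover have "measure ?N (A' - B) = measure ?N A' - measure ?N B"
    using N.finite_measure_Diff[of A' B] B(2) B(1) A'M by simp
  moreover have "measure ?N B > 0" using B by (intro pos) auto
  ultimately show "\<exists>B\<in>sets ?N. B \<subseteq> A \<and> 0 < measure ?N B \<and> measure ?N B < measure ?N A"
    using B eq by (intro bexI[of _ B]) (auto simp: A'_def)
qed



lemma PQ_D:
  assumes "Q \<in> PQ M Y"
  obtains D where "Q = density M (\<lambda>\<omega>. ennreal (D \<omega>))" "D \<in> borel_measurable M"
    "\<forall>\<omega>\<in>space M. 0 \<le> D \<omega> \<and> D \<omega> \<le> Y \<omega>" "integral\<^sup>L M D = 1" "integrable M D"
proof -
  obtain D where D: "Q = density M (\<lambda>\<omega>. ennreal (D \<omega>))" "D \<in> borel_measurable M"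
    "\<forall>\<omega>\<in>space M. 0 \<le> D \<omega> \<and> D \<omega> \<le> Y \<omega>" "integral\<^sup>L M D = 1"
    using assms unfolding PQ_def by blast
  have "integrable M D"
  proof (rule ccontr)
    assume "\<not> integrable M D"
    then have "integral\<^sup>L M D = 0" by (rule not_integrable_integral_eq)
    then show False using D by simp
  qed
  then show ?thesis using D that by blast
qed

lemma LVaR_upper:
  fixes Y Z :: "'a \<Rightarrow> real"
  assumes Y: "Y \<in> borel_measurable M" "\<forall>\<omega>\<in>space M. 0 \<le> Y \<omega>" "integrable M Y"
    and Z: "Z \<in> borel_measurable M"
    and h: "integral\<^sup>L M (\<lambda>\<omega>. Y \<omega> * indicator {\<omega>\<in>space M. Z \<omega> > a} \<omega>) \<le> L a"
  shows "(SUP Q\<in>PQ M Y. LVaR L Q Z) \<le> ereal a"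
proof (rule SUP_least)
  fix Q assume "Q \<in> PQ M Y"
  then obtain D where D: "Q = density M (\<lambda>\<omega>. ennreal (D \<omega>))" "D \<in> borel_measurable M"
    "\<forall>\<omega>\<in>space M. 0 \<le> D \<omega> \<and> D \<omega> \<le> Y \<omega>" "integral\<^sup>L M D = 1" "integrable M D"
    by (rule PQ_D)
  let ?A = "{\<omega>\<in>space M. Z \<omega> > a}"
  have A: "?A \<in> sets M" using Z by measurable
  have "measure Q {\<omega>\<in>space Q. Z \<omega> > a} = integral\<^sup>L M (\<lambda>\<omega>. D \<omega> * indicator ?A \<omega>)"
    using D measure_density_int[of D M ?A] A by simp
  also have "\<dots> \<le> integral\<^sup>L M (\<lambda>\<omega>. Y \<omega> * indicator ?A \<omega>)"
    using D Y A by (intro integral_mono integrable_real_mult_indicator) (auto simp: indicator_def)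
  also have "\<dots> \<le> L a" by (rule h)
  finally show "LVaR L Q Z \<le> ereal a"
    unfolding LVaR_def by (intro Inf_lower) blast
qed

lemma exists_Q:
  fixes Y :: "'a \<Rightarrow> real"
  assumes P: "prob_space M"
    and Y: "Y \<in> borel_measurable M" "\<forall>\<omega>\<in>space M. 0 \<le> Y \<omega>" "integrable M Y" "1 < integral\<^sup>L M Y"
    and A: "A \<in> sets M" and vpos: "0 < integral\<^sup>L M (\<lambda>\<omega>. Y \<omega> * indicator A \<omega>)"
  shows "\<exists>Q\<in>PQ M Y. measure Q A = min (integral\<^sup>L M (\<lambda>\<omega>. Y \<omega> * indicator A \<omega>)) 1"
proof -
  define v where "v = integral\<^sup>L M (\<lambda>\<omega>. Y \<omega> * indicator A \<omega>)"
  define m where "m = integral\<^sup>L M Y"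
  define p where "p = min 1 (1 / v)"
  define q where "q = (1 - p * v) / (m - v)"
  define D where "D \<omega> = p * (Y \<omega> * indicator A \<omega>) + q * (Y \<omega> - Y \<omega> * indicator A \<omega>)" for \<omega>
  have iYA: "integrable M (\<lambda>\<omega>. Y \<omega> * indicator A \<omega>)"
    using Y A by (intro integrable_real_mult_indicator) auto
  have vm: "v \<le> m" unfolding v_def m_def
    using Y iYA by (intro integral_mono) (auto simp: indicator_def)
  have v0: "0 < v" using vpos by (simp add: v_def)
  have pv: "p * v = min v 1" using v0 by (auto simp: p_def min_def field_simps)
  have p01: "0 < p" "p \<le> 1" using v0 by (auto simp: p_def)
  have q0: "0 \<le> q" unfolding q_def using pv vm by (intro divide_nonneg_nonneg) auto
  have q1: "q \<le> 1"
  proof (cases "m = v")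
    case True then show ?thesis by (simp add: q_def)
  next
    case False
    then have "m - v > 0" using vm by simp
    moreover have "1 - p * v \<le> m - v" using pv Y(4) vm unfolding m_def by (auto simp: min_def)
    ultimately show ?thesis unfolding q_def by simp
  qed
  have Dmeas: "D \<in> borel_measurable M" unfolding D_def using Y A by measurable
  have Dbd: "\<forall>\<omega>\<in>space M. 0 \<le> D \<omega> \<and> D \<omega> \<le> Y \<omega>"
  proof
    fix \<omega> assume w: "\<omega> \<in> space M"
    show "0 \<le> D \<omega> \<and> D \<omega> \<le> Y \<omega>"
    proof (cases "\<omega> \<in> A")
      case True
      then have "D \<omega> = p * Y \<omega>" by (simp add: D_def)
      moreover have "0 \<le> Y \<omega>" using Y(2) w by blast
      ultimately show ?thesis using p01 mult_left_le_one_le[of "Y \<omega>" p] by simp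
    next
      case False
      then have "D \<omega> = q * Y \<omega>" by (simp add: D_def)
      moreover have "0 \<le> Y \<omega>" using Y(2) w by blast
      ultimately show ?thesis using q0 q1 mult_left_le_one_le[of "Y \<omega>" q] by simp
    qed
  qed
  have iD: "integral\<^sup>L M D = p * v + q * (m - v)"
    unfolding D_def v_def m_def using iYA Y by (simp add: integral_diff)
  have "integral\<^sup>L M D = 1"
  proof (cases "m = v")
    case True
    then have "p * v = 1" using pv Y(4) by (simp add: m_def)
    then show ?thesis using iD True by simp
  next
    case False
    then show ?thesis using iD by (simp add: q_def)
  qed
  then have QPQ: "density M (\<lambda>\<omega>. ennreal (D \<omega>)) \<in> PQ M Y"
    unfolding PQ_def using Dmeas Dbd by blast
  have iD': "integrable M D"
    unfolding D_def using iYA Y by simp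
  have "measure (density M (\<lambda>\<omega>. ennreal (D \<omega>))) A = integral\<^sup>L M (\<lambda>\<omega>. D \<omega> * indicator A \<omega>)"
    using measure_density_int[of D M A] Dmeas Dbd iD' A by simp
  also have "\<dots> = integral\<^sup>L M (\<lambda>\<omega>. p * (Y \<omega> * indicator A \<omega>))"
    by (rule Bochner_Integration.integral_cong[OF refl]) (auto simp: D_def indicator_def)
  also have "\<dots> = p * v" by (simp add: v_def)
  finally show ?thesis using QPQ pv v_def by auto
qed


lemma LVaR_lower:
  fixes Y Z :: "'a \<Rightarrow> real"
  assumes P: "prob_space M"
    and Y: "Y \<in> borel_measurable M" "\<forall>\<omega>\<in>space M. 0 \<le> Y \<omega>" "integrable M Y" "1 < integral\<^sup>L M Y"
    and Z: "Z \<in> borel_measurable M" and L: "L \<in> H_I"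
    and r: "(SUP Q\<in>PQ M Y. LVaR L Q Z) < ereal r"
  shows "integral\<^sup>L M (\<lambda>\<omega>. Y \<omega> * indicator {\<omega>\<in>space M. Z \<omega> > r} \<omega>) \<le> L r"
proof (rule ccontr)
  let ?A = "{\<omega>\<in>space M. Z \<omega> > r}"
  let ?v = "integral\<^sup>L M (\<lambda>\<omega>. Y \<omega> * indicator ?A \<omega>)"
  have A: "?A \<in> sets M" using Z by measurable
  have Lp: "mono L" "\<And>x. 0 < L x \<and> L x < 1" using L by (auto simp: H_I_def)
  assume "\<not> ?v \<le> L r"
  then have vL: "L r < ?v" by simp
  then have "0 < ?v" using Lp(2)[of r] by linarith
  then obtain Q where Q: "Q \<in> PQ M Y" "measure Q ?A = min ?v 1"
    using exists_Q[OF P Y A] by blast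
  have QL: "L r < measure Q ?A" using Q(2) vL Lp(2)[of r] by simp
  obtain D where D: "Q = density M (\<lambda>\<omega>. ennreal (D \<omega>))" "D \<in> borel_measurable M"
    "\<forall>\<omega>\<in>space M. 0 \<le> D \<omega> \<and> D \<omega> \<le> Y \<omega>" "integral\<^sup>L M D = 1" "integrable M D"
    using Q(1) by (rule PQ_D)
  interpret Qf: finite_measure Q using finite_density[of D M] D by simp
  have "LVaR L Q Z \<le> (SUP Q\<in>PQ M Y. LVaR L Q Z)" using Q(1) by (rule SUP_upper)
  then have "LVaR L Q Z < ereal r" using r by (rule le_less_trans)
  then have "\<exists>y\<in>{ereal x | x. measure Q {\<omega> \<in> space Q. Z \<omega> > x} \<le> L x}. y < ereal r"
    unfolding LVaR_def by (simp only: Inf_less_iff)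
  then obtain y where y: "y \<in> {ereal x | x. measure Q {\<omega> \<in> space Q. Z \<omega> > x} \<le> L x}" "y < ereal r"
    by blast
  then obtain x where x: "y = ereal x" "measure Q {\<omega> \<in> space Q. Z \<omega> > x} \<le> L x" by blast
  have xr: "x < r" using x y by simp
  have sQ: "space Q = space M" "sets Q = sets M" using D(1) by simp_all
  have S: "{\<omega>\<in>space M. Z \<omega> > x} \<in> sets M" using Z by measurable
  have sub: "?A \<subseteq> {\<omega> \<in> space M. Z \<omega> > x}" using xr by auto
  have "measure Q ?A \<le> measure Q {\<omega> \<in> space Q. Z \<omega> > x}"
    unfolding sQ(1) using Qf.finite_measure_mono[OF sub] S sQ(2) by metis
  also have "\<dots> \<le> L x" by (rule x(2))
  also have "\<dots> \<le> L r" using monoD[OF Lp(1), of x r] xr by simp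
  finally show False using QL by simp
qed

lemma tails:
  fixes Y Z :: "'a \<Rightarrow> real"
  assumes Y: "Y \<in> borel_measurable M" "\<forall>\<omega>\<in>space M. 0 \<le> Y \<omega>" "integrable M Y"
    and Z: "Z \<in> borel_measurable M"
  shows "(\<lambda>k. integral\<^sup>L M (\<lambda>\<omega>. Y \<omega> * indicator {\<omega>\<in>space M. Z \<omega> > real k} \<omega>)) \<longlonglongrightarrow> 0"
    and "(\<lambda>k. integral\<^sup>L M (\<lambda>\<omega>. Y \<omega> * indicator {\<omega>\<in>space M. Z \<omega> > - real k} \<omega>)) \<longlonglongrightarrow> integral\<^sup>L M Y"
proof -
  let ?N = "density M (\<lambda>\<omega>. ennreal (Y \<omega>))"
  interpret N: finite_measure ?N using finite_density[OF Y] .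
  have eq: "integral\<^sup>L M (\<lambda>\<omega>. Y \<omega> * indicator {\<omega>\<in>space M. Z \<omega> > c} \<omega>) = measure ?N {\<omega>\<in>space M. Z \<omega> > c}" for c
    using Z by (intro measure_density_int[symmetric] Y) measurable
  have "(\<lambda>k. measure ?N {\<omega>\<in>space M. Z \<omega> > real k}) \<longlonglongrightarrow> measure ?N (\<Inter>k. {\<omega>\<in>space M. Z \<omega> > real k})"
    using Z by (intro N.finite_Lim_measure_decseq) (auto simp: decseq_def)
  moreover have "(\<Inter>k. {\<omega>\<in>space M. Z \<omega> > real k}) = {}"
  proof -
    have "\<exists>k. \<not> Z \<omega> > real k" for \<omega>
      using reals_Archimedean2[of "Z \<omega>"] by (metis less_imp_le not_less)
    then show ?thesis by auto
  qed
  ultimately show "(\<lambda>k. integral\<^sup>L M (\<lambda>\<omega>. Y \<omega> * indicator {\<omega>\<in>space M. Z \<omega> > real k} \<omega>)) \<longlonglongrightarrow> 0"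
    unfolding eq by simp
  have "(\<lambda>k. measure ?N {\<omega>\<in>space M. Z \<omega> > - real k}) \<longlonglongrightarrow> measure ?N (\<Union>k. {\<omega>\<in>space M. Z \<omega> > - real k})"
    using Z by (intro N.finite_Lim_measure_incseq) (auto simp: incseq_def)
  moreover have "(\<Union>k. {\<omega>\<in>space M. Z \<omega> > - real k}) = space M"
  proof -
    have "\<exists>k. Z \<omega> > - real k" for \<omega>
    proof -
      obtain n where "- Z \<omega> < real n" using reals_Archimedean2 by blast
      then have "- real n < Z \<omega>" by linarith
      then show ?thesis by blast
    qed
    then show ?thesis by auto
  qed
  moreover have "measure ?N (space M) = integral\<^sup>L M Y"
  proof -
    have "measure ?N (space M) = integral\<^sup>L M (\<lambda>\<omega>. Y \<omega> * indicator (space M) \<omega>)"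
      by (intro measure_density_int Y) simp
    also have "\<dots> = integral\<^sup>L M Y"
      by (rule Bochner_Integration.integral_cong[OF refl]) auto
    finally show ?thesis .
  qed
  ultimately show "(\<lambda>k. integral\<^sup>L M (\<lambda>\<omega>. Y \<omega> * indicator {\<omega>\<in>space M. Z \<omega> > - real k} \<omega>)) \<longlonglongrightarrow> integral\<^sup>L M Y"
    unfolding eq by simp
qed

lemma rho_finite:
  fixes Y Z :: "'a \<Rightarrow> real"
  assumes P: "prob_space M"
    and Y: "Y \<in> borel_measurable M" "\<forall>\<omega>\<in>space M. 0 \<le> Y \<omega>" "integrable M Y" "1 < integral\<^sup>L M Y"
    and Z: "Z \<in> borel_measurable M" and L: "L \<in> H_I"
  shows "\<exists>p. (SUP Q\<in>PQ M Y. LVaR L Q Z) = ereal p"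
proof -
  let ?rho = "(SUP Q\<in>PQ M Y. LVaR L Q Z)"
  have Lp: "mono L" "\<And>x. 0 < L x \<and> L x < 1" using L by (auto simp: H_I_def)
  have "eventually (\<lambda>k. integral\<^sup>L M (\<lambda>\<omega>. Y \<omega> * indicator {\<omega>\<in>space M. Z \<omega> > real k} \<omega>) < L 0) sequentially"
    using order_tendstoD(2)[OF tails(1)[OF Y(1-3) Z], of "L 0"] Lp(2)[of 0] by simp
  then obtain k where k: "integral\<^sup>L M (\<lambda>\<omega>. Y \<omega> * indicator {\<omega>\<in>space M. Z \<omega> > real k} \<omega>) < L 0"
    by (auto simp: eventually_sequentially)
  have "L 0 \<le> L (real k)" using monoD[OF Lp(1), of 0 "real k"] by simp
  then have "integral\<^sup>L M (\<lambda>\<omega>. Y \<omega> * indicator {\<omega>\<in>space M. Z \<omega> > real k} \<omega>) \<le> L (real k)"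
    using k by linarith
  then have "?rho \<le> ereal (real k)" by (rule LVaR_upper[OF Y(1-3) Z])
  then have ninf: "?rho \<noteq> \<infinity>" by auto
  have "?rho \<noteq> - \<infinity>"
  proof
    assume minf: "?rho = - \<infinity>"
    have "eventually (\<lambda>k. integral\<^sup>L M (\<lambda>\<omega>. Y \<omega> * indicator {\<omega>\<in>space M. Z \<omega> > - real k} \<omega>) > 1) sequentially"
      using order_tendstoD(1)[OF tails(2)[OF Y(1-3) Z], of 1] Y(4) by simp
    then obtain k where k: "integral\<^sup>L M (\<lambda>\<omega>. Y \<omega> * indicator {\<omega>\<in>space M. Z \<omega> > - real k} \<omega>) > 1"
      by (auto simp: eventually_sequentially)
    have "integral\<^sup>L M (\<lambda>\<omega>. Y \<omega> * indicator {\<omega>\<in>space M. Z \<omega> > - real k} \<omega>) \<le> L (- real k)"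
      by (rule LVaR_lower[OF P Y Z L]) (simp add: minf)
    then show False using k Lp(2)[of "- real k"] by simp
  qed
  then show ?thesis using ninf by (cases ?rho) auto
qed



lemma nu_eq:
  fixes Y Z :: "'a \<Rightarrow> real"
  assumes Y: "Y \<in> borel_measurable M" "\<forall>\<omega>\<in>space M. 0 \<le> Y \<omega>" "integrable M Y"
    and Z: "Z \<in> borel_measurable M"
  shows "integral\<^sup>L M (\<lambda>\<omega>. Y \<omega> * indicator {\<omega>\<in>space M. Z \<omega> > c} \<omega>)
       = measure (density M (\<lambda>\<omega>. ennreal (Y \<omega>))) {\<omega>\<in>space M. Z \<omega> > c}"
  using Z by (intro measure_density_int[symmetric] Y) measurable

lemma L_facts:
  assumes "L \<in> H_I"
  shows "mono L" "0 < L x" "L x < 1" "bdd_above (range L)" "L x \<le> (SUP t. L t)" "0 \<le> (SUP t. L t)"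
proof -
  show m: "mono L" "0 < L x" "L x < 1" using assms by (auto simp: H_I_def)
  show b: "bdd_above (range L)" using assms by (auto simp: H_I_def intro!: bdd_aboveI[of _ 1] less_imp_le)
  show "L x \<le> (SUP t. L t)" by (rule cSUP_upper[OF UNIV_I b])
  then show "0 \<le> (SUP t. L t)" using m(2) by linarith
qed

lemma lower_bound:
  fixes Y X :: "'a \<Rightarrow> real"
  assumes P: "prob_space M"
    and Y: "Y \<in> borel_measurable M" "\<forall>\<omega>\<in>space M. 0 \<le> Y \<omega>" "integrable M Y" "1 < integral\<^sup>L M Y"
    and adm: "admissible_rv_set M Xs" and L: "\<forall>i<n. L i \<in> H_I" and n: "0 < n"
    and X: "X \<in> borel_measurable M"
  shows "Inf {ereal x | x. integral\<^sup>L M (\<lambda>\<omega>. Y \<omega> * indicator {\<omega>\<in>space M. X \<omega> > x} \<omega>)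
                            \<le> (\<Sum>i<n. (SUP t. L i t))}
    \<le> inf_conv M Xs n (\<lambda>i Z. SUP Q\<in>PQ M Y. LVaR (L i) Q Z) X"
  unfolding inf_conv_def
proof (rule Inf_greatest)
  let ?N = "density M (\<lambda>\<omega>. ennreal (Y \<omega>))"
  interpret N: finite_measure ?N using finite_density[OF Y(1-3)] .
  let ?T = "Inf {ereal x | x. integral\<^sup>L M (\<lambda>\<omega>. Y \<omega> * indicator {\<omega>\<in>space M. X \<omega> > x} \<omega>)
                            \<le> (\<Sum>i<n. (SUP t. L i t))}"
  fix z assume "z \<in> {(\<Sum>i<n. SUP Q\<in>PQ M Y. LVaR (L i) Q (Z i)) | Z.
      (\<forall>i<n. Z i \<in> Xs) \<and> (\<forall>\<omega>\<in>space M. (\<Sum>i<n. Z i \<omega>) = X \<omega>)}"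
  then obtain Z where Z: "z = (\<Sum>i<n. SUP Q\<in>PQ M Y. LVaR (L i) Q (Z i))" "\<forall>i<n. Z i \<in> Xs"
      "\<forall>\<omega>\<in>space M. (\<Sum>i<n. Z i \<omega>) = X \<omega>"
    by blast
  have Zm: "Z i \<in> borel_measurable M" if "i < n" for i
    using adm Z(2) that unfolding admissible_rv_set_def by blast
  have "\<forall>i. \<exists>p. i < n \<longrightarrow> (SUP Q\<in>PQ M Y. LVaR (L i) Q (Z i)) = ereal p"
  proof
    fix i show "\<exists>p. i < n \<longrightarrow> (SUP Q\<in>PQ M Y. LVaR (L i) Q (Z i)) = ereal p"
    proof (cases "i < n")
      case True
      then show ?thesis using rho_finite[OF P Y Zm[OF True] L[rule_format, OF True]] by blast
    qed simp
  qed
  then have "\<exists>p. \<forall>i. i < n \<longrightarrow> (SUP Q\<in>PQ M Y. LVaR (L i) Q (Z i)) = ereal (p i)"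
    by (rule choice)
  then obtain p where p: "\<And>i. i < n \<Longrightarrow> (SUP Q\<in>PQ M Y. LVaR (L i) Q (Z i)) = ereal (p i)"
    by blast
  have "(\<Sum>i<n. SUP Q\<in>PQ M Y. LVaR (L i) Q (Z i)) = (\<Sum>i<n. ereal (p i))"
    by (rule sum.cong[OF refl]) (use p in simp)
  then have z: "z = ereal (\<Sum>i<n. p i)" unfolding Z(1) by (simp only: sum_ereal)
  show "?T \<le> z" unfolding z
  proof (rule ereal_le_epsilon2)
    fix e :: real assume e: "0 < e"
    define r where "r i = p i + e / real n" for i
    have sr: "(\<Sum>i<n. r i) = (\<Sum>i<n. p i) + e"
      unfolding r_def using n by (simp add: sum.distrib)
    have hi: "integral\<^sup>L M (\<lambda>\<omega>. Y \<omega> * indicator {\<omega>\<in>space M. Z i \<omega> > r i} \<omega>) \<le> (SUP t. L i t)"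
      if i: "i < n" for i
    proof -
      have "ereal (p i) < ereal (r i)" using e n by (simp add: r_def)
      then have "integral\<^sup>L M (\<lambda>\<omega>. Y \<omega> * indicator {\<omega>\<in>space M. Z i \<omega> > r i} \<omega>) \<le> L i (r i)"
        using p[OF i] by (intro LVaR_lower[OF P Y Zm[OF i]] L[rule_format, OF i]) simp
      also have "\<dots> \<le> (SUP t. L i t)" using L_facts(5)[OF L[rule_format, OF i]] .
      finally show ?thesis .
    qed
    have sub: "{\<omega>\<in>space M. X \<omega> > (\<Sum>i<n. r i)} \<subseteq> (\<Union>i<n. {\<omega>\<in>space M. Z i \<omega> > r i})"
    proof
      fix \<omega> assume w: "\<omega> \<in> {\<omega>\<in>space M. X \<omega> > (\<Sum>i<n. r i)}"
      show "\<omega> \<in> (\<Union>i<n. {\<omega>\<in>space M. Z i \<omega> > r i})"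
      proof (rule ccontr)
        assume "\<not> ?thesis"
        then have "\<forall>i<n. Z i \<omega> \<le> r i" using w by (auto simp: not_less)
        then have "(\<Sum>i<n. Z i \<omega>) \<le> (\<Sum>i<n. r i)" by (intro sum_mono) auto
        then show False using w Z(3) by auto
      qed
    qed
    have sets: "{\<omega>\<in>space M. Z i \<omega> > r i} \<in> sets ?N" if "i < n" for i
      using Zm[OF that] by simp measurable
    have "integral\<^sup>L M (\<lambda>\<omega>. Y \<omega> * indicator {\<omega>\<in>space M. X \<omega> > (\<Sum>i<n. r i)} \<omega>)
        = measure ?N {\<omega>\<in>space M. X \<omega> > (\<Sum>i<n. r i)}"
      by (rule nu_eq[OF Y(1-3) X])
    also have "\<dots> \<le> measure ?N (\<Union>i<n. {\<omega>\<in>space M. Z i \<omega> > r i})"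
      using sub sets by (intro N.finite_measure_mono) auto
    also have "\<dots> \<le> (\<Sum>i<n. measure ?N {\<omega>\<in>space M. Z i \<omega> > r i})"
      using sets by (intro N.finite_measure_subadditive_finite) auto
    also have "\<dots> = (\<Sum>i<n. integral\<^sup>L M (\<lambda>\<omega>. Y \<omega> * indicator {\<omega>\<in>space M. Z i \<omega> > r i} \<omega>))"
      using nu_eq[OF Y(1-3) Zm] by simp
    also have "\<dots> \<le> (\<Sum>i<n. (SUP t. L i t))"
      using hi by (intro sum_mono) auto
    finally have "ereal (\<Sum>i<n. r i) \<in> {ereal x | x. integral\<^sup>L M (\<lambda>\<omega>. Y \<omega> * indicator {\<omega>\<in>space M. X \<omega> > x} \<omega>)
                            \<le> (\<Sum>i<n. (SUP t. L i t))}" by blast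
    then have "?T \<le> ereal (\<Sum>i<n. r i)" by (rule Inf_lower)
    then show "?T \<le> ereal (\<Sum>i<n. p i) + ereal e" using sr by simp
  qed
qed


lemma adm_add:
  assumes adm: "admissible_rv_set M Xs" and "X \<in> Xs" "Z \<in> Xs"
  shows "(\<lambda>\<omega>. X \<omega> + Z \<omega>) \<in> Xs" "(\<lambda>\<omega>. X \<omega> - Z \<omega>) \<in> Xs"
proof -
  have h: "\<forall>X\<in>Xs. \<forall>Z\<in>Xs. (\<lambda>\<omega>. X \<omega> + Z \<omega>) \<in> Xs \<and> (\<lambda>\<omega>. X \<omega> - Z \<omega>) \<in> Xs"
    using adm unfolding admissible_rv_set_def by (elim conjE)
  show "(\<lambda>\<omega>. X \<omega> + Z \<omega>) \<in> Xs" "(\<lambda>\<omega>. X \<omega> - Z \<omega>) \<in> Xs"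
    using bspec[OF bspec[OF h assms(2)] assms(3)] by auto
qed

lemma adm_ind:
  assumes adm: "admissible_rv_set M Xs" and "X \<in> Xs" "A \<in> sets M"
  shows "(\<lambda>\<omega>. indicator A \<omega> * X \<omega>) \<in> Xs"
proof -
  have h: "\<forall>X\<in>Xs. \<forall>A\<in>sets M. (\<lambda>\<omega>. indicator A \<omega> * X \<omega>) \<in> Xs"
    using adm unfolding admissible_rv_set_def by (elim conjE)
  show ?thesis using bspec[OF bspec[OF h assms(2)] assms(3)] .
qed

lemma adm_const:
  assumes adm: "admissible_rv_set M Xs"
  shows "(\<lambda>_. c) \<in> Xs"
  using adm unfolding admissible_rv_set_def by blast

lemma adm_meas:
  assumes adm: "admissible_rv_set M Xs" and "X \<in> Xs"
  shows "X \<in> borel_measurable M"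
  using assms unfolding admissible_rv_set_def by blast

lemma adm_sum:
  assumes adm: "admissible_rv_set M Xs" and I: "finite I"
  shows "(\<forall>i\<in>I. f i \<in> Xs) \<Longrightarrow> (\<lambda>\<omega>. \<Sum>i\<in>I. f i \<omega>) \<in> Xs"
  using I
proof (induction I rule: finite_induct)
  case empty
  then show ?case using adm_const[OF adm, of 0] by simp
next
  case (insert x F)
  then have "f x \<in> Xs" "(\<lambda>\<omega>. \<Sum>i\<in>F. f i \<omega>) \<in> Xs" by auto
  then have "(\<lambda>\<omega>. f x \<omega> + (\<Sum>i\<in>F. f i \<omega>)) \<in> Xs"
    by (rule adm_add[OF adm])
  then show ?case using insert by simp
qed

lemma attain_max:
  assumes L: "\<forall>i<n. L i \<in> H_I" and att: "attainable n L" and k: "k < n" "\<forall>x. L k x = c"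
  obtains y0 where "\<And>j. j < n \<Longrightarrow> L j (y0 j) = (SUP t. L j t)"
proof -
  obtain y0 where y0: "(\<Sum>i<n. y0 i) = 0" "(\<Sum>i<n. L i (y0 i)) = Lambda_bar_star n L 0"
    using att unfolding attainable_def by blast
  let ?S = "{(\<Sum>i<n. L i (w i)) | w. (\<Sum>i<n. w i) = 0}"
  have bdd: "bdd_above ?S"
  proof (rule bdd_aboveI[of _ "real n"])
    fix x assume "x \<in> ?S"
    then obtain w where w: "x = (\<Sum>i<n. L i (w i))" by blast
    have "(\<Sum>i<n. L i (w i)) \<le> (\<Sum>i<n. 1)"
      using L by (intro sum_mono) (auto simp: H_I_def less_imp_le)
    then show "x \<le> real n" using w by simp
  qed
  have maxj: "L j u \<le> L j (y0 j)" if j: "j < n" for j u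
  proof (cases "j = k")
    case True then show ?thesis using k by simp
  next
    case False
    define w where "w i = y0 i + (if i = j then u - y0 j else 0) + (if i = k then y0 j - u else 0)" for i
    have "(\<Sum>i<n. w i) = (\<Sum>i<n. y0 i) + (\<Sum>i<n. (if i = j then u - y0 j else 0)) + (\<Sum>i<n. (if i = k then y0 j - u else 0))"
      unfolding w_def by (simp only: sum.distrib)
    also have "\<dots> = 0" using y0(1) j k by simp
    finally have ws: "(\<Sum>i<n. w i) = 0" .
    have "L i (w i) = L i (y0 i) + (if i = j then L j u - L j (y0 j) else 0)" if "i < n" for i
    proof (cases "i = j")
      case True then show ?thesis using False by (simp add: w_def)
    next
      case False2: False
      show ?thesis
      proof (cases "i = k")
        case True then show ?thesis using k False2 by simp
      next
        case False then show ?thesis using False2 by (simp add: w_def)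
      qed
    qed
    then have "(\<Sum>i<n. L i (w i)) = (\<Sum>i<n. L i (y0 i) + (if i = j then L j u - L j (y0 j) else 0))"
      by (intro sum.cong) auto
    also have "\<dots> = (\<Sum>i<n. L i (y0 i)) + (L j u - L j (y0 j))"
      using j by (simp add: sum.distrib)
    finally have eq: "(\<Sum>i<n. L i (w i)) = (\<Sum>i<n. L i (y0 i)) + (L j u - L j (y0 j))" .
    have "(\<Sum>i<n. L i (w i)) \<in> ?S" using ws by blast
    then have "(\<Sum>i<n. L i (w i)) \<le> Sup ?S" using bdd by (rule cSup_upper)
    also have "\<dots> = (\<Sum>i<n. L i (y0 i))" using y0(2) by (simp add: Lambda_bar_star_def)
    finally show ?thesis using eq by simp
  qed
  have "L j (y0 j) = (SUP t. L j t)" if j: "j < n" for j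
  proof (rule antisym)
    show "L j (y0 j) \<le> (SUP t. L j t)" using L_facts(5) L j by blast
    show "(SUP t. L j t) \<le> L j (y0 j)" using maxj[OF j] by (intro cSUP_least) auto
  qed
  then show ?thesis using that by blast
qed


lemma upper_bound:
  fixes Y X :: "'a \<Rightarrow> real"
  assumes P: "prob_space M" and at: "atomless M"
    and Y: "Y \<in> borel_measurable M" "\<forall>\<omega>\<in>space M. 0 \<le> Y \<omega>" "integrable M Y" "1 < integral\<^sup>L M Y"
    and adm: "admissible_rv_set M Xs" and L: "\<forall>i<n. L i \<in> H_I"
    and att: "attainable n L" and k: "k < n" "\<forall>x. L k x = c"
    and X: "X \<in> Xs"
  shows "inf_conv M Xs n (\<lambda>i Z. SUP Q\<in>PQ M Y. LVaR (L i) Q Z) X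
    \<le> Inf {ereal x | x. integral\<^sup>L M (\<lambda>\<omega>. Y \<omega> * indicator {\<omega>\<in>space M. X \<omega> > x} \<omega>)
                            \<le> (\<Sum>i<n. (SUP t. L i t))}"
proof (rule Inf_greatest)
  let ?N = "density M (\<lambda>\<omega>. ennreal (Y \<omega>))"
  interpret N: finite_measure ?N using finite_density[OF Y(1-3)] .
  have atN: "atomless ?N" by (rule atomless_density[OF P at Y(1-3)])
  have Xm: "X \<in> borel_measurable M" by (rule adm_meas[OF adm X])
  define lam where "lam i = (SUP t. L i t)" for i
  fix yy assume "yy \<in> {ereal x | x. integral\<^sup>L M (\<lambda>\<omega>. Y \<omega> * indicator {\<omega>\<in>space M. X \<omega> > x} \<omega>)
                            \<le> (\<Sum>i<n. (SUP t. L i t))}"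
  then obtain t where t: "yy = ereal t"
    "integral\<^sup>L M (\<lambda>\<omega>. Y \<omega> * indicator {\<omega>\<in>space M. X \<omega> > t} \<omega>) \<le> (\<Sum>i<n. lam i)"
    unfolding lam_def by blast
  obtain y0 where y0: "\<And>j. j < n \<Longrightarrow> L j (y0 j) = lam j"
    using attain_max[OF L att k] unfolding lam_def by blast
  have Ly0: "L j u = lam j" if "j < n" "y0 j \<le> u" for j u
  proof (rule antisym)
    show "L j u \<le> lam j" unfolding lam_def using L_facts(5) L that(1) by blast
    have "L j (y0 j) \<le> L j u" using monoD[OF L_facts(1)[OF L[rule_format, OF that(1)]] that(2)] .
    then show "lam j \<le> L j u" using y0[OF that(1)] by simp
  qed
  have Lk: "L k u = lam k" for u
    using y0[OF k(1)] k(2) by simp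
  have lam0: "\<forall>i<Suc m. 0 \<le> lam i" if "n = Suc m" for m
    using L_facts(6) L that unfolding lam_def by metis
  obtain m where nm: "n = Suc m" using k by (cases n) auto
  define A where "A = {\<omega>\<in>space M. X \<omega> > t}"
  have AM: "A \<in> sets M" unfolding A_def using Xm by measurable
  have "measure ?N A \<le> (\<Sum>i<Suc m. lam i)"
    using t(2) nu_eq[OF Y(1-3) Xm, of t] nm unfolding A_def by simp
  then obtain B where B: "\<forall>i<Suc m. B i \<in> sets ?N \<and> B i \<subseteq> A \<and> measure ?N (B i) \<le> lam i"
    "\<forall>i<Suc m. \<forall>j<Suc m. i \<noteq> j \<longrightarrow> B i \<inter> B j = {}" "A \<subseteq> (\<Union>i<Suc m. B i)"
    using atomless_partition[OF N.finite_measure_axioms atN, of A m lam] AM lam0[OF nm] by auto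
  have Bs: "B i \<in> sets M" "B i \<subseteq> A" "measure ?N (B i) \<le> lam i" if "i < n" for i
    using B(1) that nm by auto
  have Bd: "B i \<inter> B j = {}" if "i < n" "j < n" "i \<noteq> j" for i j
    using B(2) that nm by auto
  have Bc: "A \<subseteq> (\<Union>i<n. B i)" using B(3) nm by simp
  define K where "K = {..<n} - {k}"
  have finK: "finite K" unfolding K_def by simp
  define F where "F i \<omega> = indicator (B i) \<omega> * (X \<omega> - t) + y0 i" for i \<omega>
  define Z where "Z i = (if i = k then (\<lambda>\<omega>. X \<omega> - (\<Sum>j\<in>K. F j \<omega>)) else F i)" for i
  have XT: "(\<lambda>\<omega>. X \<omega> - t) \<in> Xs" using adm_add(2)[OF adm X adm_const[OF adm, of t]] by simp
  have FX: "F i \<in> Xs" if "i < n" for i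
  proof -
    have "(\<lambda>\<omega>. indicator (B i) \<omega> * (X \<omega> - t)) \<in> Xs" by (rule adm_ind[OF adm XT Bs(1)[OF that]])
    from adm_add(1)[OF adm this adm_const[OF adm, of "y0 i"]] show ?thesis
      unfolding F_def by simp
  qed
  have FK: "(\<lambda>\<omega>. \<Sum>j\<in>K. F j \<omega>) \<in> Xs"
    using FX by (intro adm_sum[OF adm finK]) (auto simp: K_def)
  have ZX: "\<forall>i<n. Z i \<in> Xs"
    using FX adm_add(2)[OF adm X FK] by (auto simp: Z_def)
  have Zsum: "\<forall>\<omega>\<in>space M. (\<Sum>i<n. Z i \<omega>) = X \<omega>"
  proof
    fix \<omega> assume "\<omega> \<in> space M"
    have "(\<Sum>i<n. Z i \<omega>) = Z k \<omega> + (\<Sum>i\<in>K. Z i \<omega>)"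
      unfolding K_def using k(1) by (simp add: sum.remove)
    also have "(\<Sum>i\<in>K. Z i \<omega>) = (\<Sum>i\<in>K. F i \<omega>)"
      by (intro sum.cong) (auto simp: K_def Z_def)
    finally show "(\<Sum>i<n. Z i \<omega>) = X \<omega>" by (simp add: Z_def)
  qed
  define b where "b = t - (\<Sum>j\<in>K. y0 j)"
  define w where "w i = (if i = k then b else y0 i)" for i
  have rhoZ: "(SUP Q\<in>PQ M Y. LVaR (L i) Q (Z i)) \<le> ereal (w i)" if i: "i < n" for i
  proof -
    have Zm: "Z i \<in> borel_measurable M" using adm_meas[OF adm] ZX i by blast
    have Zsets: "{\<omega>\<in>space M. Z i \<omega> > w i} \<in> sets M" using Zm by measurable
    have sub: "{\<omega>\<in>space M. Z i \<omega> > w i} \<subseteq> B i"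
    proof
      fix \<omega> assume w\<omega>: "\<omega> \<in> {\<omega>\<in>space M. Z i \<omega> > w i}"
      show "\<omega> \<in> B i"
      proof (cases "i = k")
        case False
        then have "indicator (B i) \<omega> * (X \<omega> - t) > 0" using w\<omega> by (simp add: Z_def w_def F_def)
        then show ?thesis by (cases "\<omega> \<in> B i") auto
      next
        case True
        have sF: "(\<Sum>j\<in>K. F j \<omega>) = (\<Sum>j\<in>K. indicator (B j) \<omega> * (X \<omega> - t)) + (\<Sum>j\<in>K. y0 j)"
          unfolding F_def by (simp add: sum.distrib)
        have gt: "X \<omega> - (\<Sum>j\<in>K. indicator (B j) \<omega> * (X \<omega> - t)) > t"
          using w\<omega> True sF by (simp add: Z_def w_def b_def)
        show ?thesis
        proof (cases "\<exists>j\<in>K. \<omega> \<in> B j")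
          case True
          then obtain j where j: "j \<in> K" "\<omega> \<in> B j" by blast
          have "(\<Sum>j'\<in>K. indicator (B j') \<omega> * (X \<omega> - t))
              = indicator (B j) \<omega> * (X \<omega> - t) + (\<Sum>j'\<in>K - {j}. indicator (B j') \<omega> * (X \<omega> - t))"
            by (rule sum.remove[OF finK j(1)])
          also have "(\<Sum>j'\<in>K - {j}. indicator (B j') \<omega> * (X \<omega> - t)) = 0"
          proof (rule sum.neutral, rule ballI)
            fix j' assume j': "j' \<in> K - {j}"
            then have "B j' \<inter> B j = {}" using j by (intro Bd) (auto simp: K_def)
            then have "\<omega> \<notin> B j'" using j by auto
            then show "indicator (B j') \<omega> * (X \<omega> - t) = 0" by simp
          qed
          finally show ?thesis using gt j by simp
        next
          case False
          then have "(\<Sum>j\<in>K. indicator (B j) \<omega> * (X \<omega> - t)) = 0" by (intro sum.neutral) auto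
          then have "\<omega> \<in> A" using gt w\<omega> by (simp add: A_def)
          then obtain i' where i': "i' < n" "\<omega> \<in> B i'" using Bc by blast
          then have "i' = k" using False by (auto simp: K_def)
          then show ?thesis using i' \<open>i = k\<close> by simp
        qed
      qed
    qed
    have "integral\<^sup>L M (\<lambda>\<omega>. Y \<omega> * indicator {\<omega>\<in>space M. Z i \<omega> > w i} \<omega>)
        = measure ?N {\<omega>\<in>space M. Z i \<omega> > w i}" by (rule nu_eq[OF Y(1-3) Zm])
    also have "\<dots> \<le> measure ?N (B i)" using sub Bs(1)[OF i] by (intro N.finite_measure_mono) auto
    also have "\<dots> \<le> lam i" by (rule Bs(3)[OF i])
    also have "\<dots> = L i (w i)"
    proof (cases "i = k")
      case True then show ?thesis using Lk by simp
    next
      case False then show ?thesis using Ly0[OF i, of "w i"] by (simp add: w_def)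
    qed
    finally show ?thesis by (rule LVaR_upper[OF Y(1-3) Zm])
  qed
  have "inf_conv M Xs n (\<lambda>i Z. SUP Q\<in>PQ M Y. LVaR (L i) Q Z) X \<le> (\<Sum>i<n. SUP Q\<in>PQ M Y. LVaR (L i) Q (Z i))"
    unfolding inf_conv_def using ZX Zsum by (intro Inf_lower) blast
  also have "\<dots> \<le> (\<Sum>i<n. ereal (w i))" using rhoZ by (intro sum_mono) auto
  also have "\<dots> = ereal (\<Sum>i<n. w i)" by (rule sum_ereal)
  also have "(\<Sum>i<n. w i) = w k + (\<Sum>i\<in>K. w i)"
    unfolding K_def using k(1) by (simp add: sum.remove)
  also have "(\<Sum>i\<in>K. w i) = (\<Sum>i\<in>K. y0 i)" by (intro sum.cong) (auto simp: K_def w_def)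
  also have "w k + (\<Sum>i\<in>K. y0 i) = t" by (simp add: w_def b_def)
  finally show "inf_conv M Xs n (\<lambda>i Z. SUP Q\<in>PQ M Y. LVaR (L i) Q Z) X \<le> yy" using t(1) by simp
qed


theorem mainTheorem18:
  fixes M :: "'a measure" and Y :: "'a \<Rightarrow> real" and n :: nat
    and L :: "nat \<Rightarrow> real \<Rightarrow> real" and Xs :: "('a \<Rightarrow> real) set" and X :: "'a \<Rightarrow> real"
  assumes "prob_space M" and "atomless M"
    and "admissible_rv_set M Xs"
    and "\<forall>i<n. L i \<in> H_I"
    and "Y \<in> borel_measurable M" and "\<forall>\<omega>\<in>space M. 0 \<le> Y \<omega>"
    and "integrable M Y" and "1 < integral\<^sup>L M Y"
    and "attainable n L"
    and "\<exists>i<n. \<exists>c. \<forall>x. L i x = c"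
    and "X \<in> Xs"
  shows "inf_conv M Xs n (\<lambda>i Z. SUP Q\<in>PQ M Y. LVaR (L i) Q Z) X
       = Inf {ereal x | x. integral\<^sup>L M (\<lambda>\<omega>. Y \<omega> * indicator {\<omega>\<in>space M. X \<omega> > x} \<omega>)
                            \<le> (\<Sum>i<n. (SUP t. L i t))}"
  proof -
  obtain k c where k: "k < n" "\<forall>x. L k x = c" using assms(10) by blast
  have n: "0 < n" using k by simp
  have Xm: "X \<in> borel_measurable M" by (rule adm_meas[OF assms(3) assms(11)])
  have Y: "Y \<in> borel_measurable M" "\<forall>\<omega>\<in>space M. 0 \<le> Y \<omega>" "integrable M Y" "1 < integral\<^sup>L M Y"
    using assms(5-8) by auto
  show ?thesis
  proof (rule antisym)
    show "inf_conv M Xs n (\<lambda>i Z. SUP Q\<in>PQ M Y. LVaR (L i) Q Z) X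
       \<le> Inf {ereal x | x. integral\<^sup>L M (\<lambda>\<omega>. Y \<omega> * indicator {\<omega>\<in>space M. X \<omega> > x} \<omega>)
                            \<le> (\<Sum>i<n. (SUP t. L i t))}"
      by (rule upper_bound[OF assms(1,2) Y assms(3,4,9) k assms(11)])
    show "Inf {ereal x | x. integral\<^sup>L M (\<lambda>\<omega>. Y \<omega> * indicator {\<omega>\<in>space M. X \<omega> > x} \<omega>)
                            \<le> (\<Sum>i<n. (SUP t. L i t))}
       \<le> inf_conv M Xs n (\<lambda>i Z. SUP Q\<in>PQ M Y. LVaR (L i) Q Z) X"
      by (rule lower_bound[OF assms(1) Y assms(3,4) n Xm])
  qed
qed

end
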